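(* Let $A$ be an integral residuated $\vee$-semilattice. Then every $\to$-prime filter of $A$ is $\vee$-prime, every $\leadsto$-prime filter of $A$ is $\vee$-prime, and every prime filter of $A$ is $\vee$-prime.
   Context: A residuated poset is a partially ordered semigroup $(A;\cdot,\le)$ with binary operations $\to,\leadsto$ such that $x\cdot y\le z$ iff $x\le y\to z$ iff $y\le x\leadsto z$. It is a residuated $\vee$-semilattice if $(A,\le)$ is a join-semilattice, and integral if it has a greatest element $1$ that is a multiplicative identity. A filter is a nonempty upward closed subset closed under $\cdot$. A filter $F$ is $\to$-prime if for all $x,y$, $x\to y\in F$ or $y\to x\in F$; $\leadsto$-prime if for all $x,y$, $x\leadsto y\in F$ or $y\leadsto x\in F$; prime if both; $\vee$-prime if $x\vee y\in F$ implies $x\in F$ or $y\in F$. *)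

theory Defs
  imports Main
begin

text \<open>A residuated poset on the whole type 'a, given by a partial order le, a
multiplication m, and residuals r (for the arrow) and l (for the squiggly arrow):
m x y le z iff x le r y z iff y le l x z.\<close>

definition residuated_poset ::
  "('a \<Rightarrow> 'a \<Rightarrow> bool) \<Rightarrow> ('a \<Rightarrow> 'a \<Rightarrow> 'a) \<Rightarrow> ('a \<Rightarrow> 'a \<Rightarrow> 'a) \<Rightarrow> ('a \<Rightarrow> 'a \<Rightarrow> 'a) \<Rightarrow> bool" where
  "residuated_poset le m r l \<longleftrightarrow>
     (\<forall>x. le x x) \<and>
     (\<forall>x y. le x y \<and> le y x \<longrightarrow> x = y) \<and>
     (\<forall>x y z. le x y \<and> le y z \<longrightarrow> le x z) \<and>
     (\<forall>x y z. m (m x y) z = m x (m y z)) \<and>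
     (\<forall>x y z. le x y \<longrightarrow> le (m x z) (m y z) \<and> le (m z x) (m z y)) \<and>
     (\<forall>x y z. (le (m x y) z \<longleftrightarrow> le x (r y z)) \<and> (le x (r y z) \<longleftrightarrow> le y (l x z)))"

definition is_join :: "('a \<Rightarrow> 'a \<Rightarrow> bool) \<Rightarrow> ('a \<Rightarrow> 'a \<Rightarrow> 'a) \<Rightarrow> bool" where
  "is_join le j \<longleftrightarrow>
     (\<forall>x y. le x (j x y) \<and> le y (j x y) \<and> (\<forall>z. le x z \<and> le y z \<longrightarrow> le (j x y) z))"

definition integral_residuated_join_semilattice ::
  "('a \<Rightarrow> 'a \<Rightarrow> bool) \<Rightarrow> ('a \<Rightarrow> 'a \<Rightarrow> 'a) \<Rightarrow> ('a \<Rightarrow> 'a \<Rightarrow> 'a) \<Rightarrow> ('a \<Rightarrow> 'a \<Rightarrow> 'a)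
    \<Rightarrow> ('a \<Rightarrow> 'a \<Rightarrow> 'a) \<Rightarrow> 'a \<Rightarrow> bool" where
  "integral_residuated_join_semilattice le m r l j e \<longleftrightarrow>
     residuated_poset le m r l \<and> is_join le j \<and>
     (\<forall>x. le x e) \<and> (\<forall>x. m e x = x \<and> m x e = x)"

definition is_filter :: "('a \<Rightarrow> 'a \<Rightarrow> bool) \<Rightarrow> ('a \<Rightarrow> 'a \<Rightarrow> 'a) \<Rightarrow> 'a set \<Rightarrow> bool" where
  "is_filter le m F \<longleftrightarrow> F \<noteq> {} \<and>
     (\<forall>x y. x \<in> F \<and> le x y \<longrightarrow> y \<in> F) \<and>
     (\<forall>x y. x \<in> F \<and> y \<in> F \<longrightarrow> m x y \<in> F)"

definition op_prime :: "('a \<Rightarrow> 'a \<Rightarrow> 'a) \<Rightarrow> 'a set \<Rightarrow> bool" where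
  "op_prime r F \<longleftrightarrow> (\<forall>x y. r x y \<in> F \<or> r y x \<in> F)"

definition join_prime :: "('a \<Rightarrow> 'a \<Rightarrow> 'a) \<Rightarrow> 'a set \<Rightarrow> bool" where
  "join_prime j F \<longleftrightarrow> (\<forall>x y. j x y \<in> F \<longrightarrow> x \<in> F \<or> y \<in> F)"

end

theory Submission
  imports Defs
begin

theorem lemma5p2:
  fixes le :: "'a \<Rightarrow> 'a \<Rightarrow> bool" and m r l j :: "'a \<Rightarrow> 'a \<Rightarrow> 'a" and e :: 'a
  assumes "integral_residuated_join_semilattice le m r l j e"
  shows "(\<forall>F. is_filter le m F \<and> op_prime r F \<longrightarrow> join_prime j F) \<and>
         (\<forall>F. is_filter le m F \<and> op_prime l F \<longrightarrow> join_prime j F) \<and>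
         (\<forall>F. is_filter le m F \<and> op_prime r F \<and> op_prime l F \<longrightarrow> join_prime j F)"
proof -
  have H1: "residuated_poset le m r l" and H2: "is_join le j" and H3: "\<forall>x. le x e"
    and H4: "\<forall>x. m e x = x \<and> m x e = x"
    using assms unfolding integral_residuated_join_semilattice_def by blast+
  have refl: "\<And>x. le x x" using H1 unfolding residuated_poset_def by blast
  have asym: "\<And>x y. le x y \<Longrightarrow> le y x \<Longrightarrow> x = y" using H1 unfolding residuated_poset_def by blast
  have mono1: "\<And>x y z. le x y \<Longrightarrow> le (m x z) (m y z)" using H1 unfolding residuated_poset_def by blast
  have mono2: "\<And>x y z. le x y \<Longrightarrow> le (m z x) (m z y)" using H1 unfolding residuated_poset_def by blast
  have res1: "\<And>x y z. le (m x y) z \<longleftrightarrow> le x (r y z)" using H1 unfolding residuated_poset_def by blast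
  have res2: "\<And>x y z. le x (r y z) \<longleftrightarrow> le y (l x z)" using H1 unfolding residuated_poset_def by blast
  have jn1: "\<And>x y. le x (j x y)" using H2 unfolding is_join_def by blast
  have jn2: "\<And>x y. le y (j x y)" using H2 unfolding is_join_def by blast
  have jn3: "\<And>x y z. le x z \<Longrightarrow> le y z \<Longrightarrow> le (j x y) z" using H2 unfolding is_join_def by blast
  have top: "\<And>x. le x e" using H3 by blast
  have unitl: "\<And>x. m e x = x" using H4 by blast
  have unitr: "\<And>x. m x e = x" using H4 by blast
  have R: "le (m (r x y) (j x y)) y" for x y
  proof -
    have a: "le x (l (r x y) y)" using res2[of "r x y" x y] refl[of "r x y"] by blast
    have "le (m (r x y) y) (m e y)" using mono1[OF top] .
    hence "le (m (r x y) y) y" using unitl[of y] by simp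
    hence "le (r x y) (r y y)" using res1 by blast
    hence b: "le y (l (r x y) y)" using res2 by blast
    have "le (j x y) (l (r x y) y)" using jn3[OF a b] .
    hence "le (r x y) (r (j x y) y)" using res2 by blast
    thus ?thesis using res1 by blast
  qed
  have L: "le (m (j x y) (l x y)) y" for x y
  proof -
    have a: "le x (r (l x y) y)" using res2[of x "l x y" y] refl[of "l x y"] by blast
    have "le (m y (l x y)) (m y e)" using mono2[OF top] .
    hence "le (m y (l x y)) y" using unitr[of y] by simp
    hence b: "le y (r (l x y) y)" using res1 by blast
    have "le (j x y) (r (l x y) y)" using jn3[OF a b] .
    thus ?thesis using res1 by blast
  qed
  have jc: "j x y = j y x" for x y
    by (rule asym; rule jn3; rule jn1 jn2)
  have A: "join_prime j F" if F1: "is_filter le m F" and F2: "op_prime r F" for F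
    unfolding join_prime_def
  proof (intro allI impI)
    fix x y assume xy: "j x y \<in> F"
    have yx: "j y x \<in> F" using xy jc by simp
    have up: "\<And>a b. a \<in> F \<Longrightarrow> le a b \<Longrightarrow> b \<in> F" using F1 unfolding is_filter_def by blast
    have mul: "\<And>a b. a \<in> F \<Longrightarrow> b \<in> F \<Longrightarrow> m a b \<in> F" using F1 unfolding is_filter_def by blast
    from F2 have "r x y \<in> F \<or> r y x \<in> F" unfolding op_prime_def by blast
    thus "x \<in> F \<or> y \<in> F"
    proof
      assume "r x y \<in> F"
      hence "y \<in> F" using up[OF mul[OF _ xy] R] by blast
      thus ?thesis ..
    next
      assume "r y x \<in> F"
      hence "x \<in> F" using up[OF mul[OF _ yx] R] by blast
      thus ?thesis ..
    qed
  qed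
  have B: "join_prime j F" if F1: "is_filter le m F" and F2: "op_prime l F" for F
    unfolding join_prime_def
  proof (intro allI impI)
    fix x y assume xy: "j x y \<in> F"
    have yx: "j y x \<in> F" using xy jc by simp
    have up: "\<And>a b. a \<in> F \<Longrightarrow> le a b \<Longrightarrow> b \<in> F" using F1 unfolding is_filter_def by blast
    have mul: "\<And>a b. a \<in> F \<Longrightarrow> b \<in> F \<Longrightarrow> m a b \<in> F" using F1 unfolding is_filter_def by blast
    from F2 have "l x y \<in> F \<or> l y x \<in> F" unfolding op_prime_def by blast
    thus "x \<in> F \<or> y \<in> F"
    proof
      assume "l x y \<in> F"
      hence "y \<in> F" using up[OF mul[OF xy] L] by blast
      thus ?thesis ..
    next
      assume "l y x \<in> F"
      hence "x \<in> F" using up[OF mul[OF yx] L] by blast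
      thus ?thesis ..
    qed
  qed
  show ?thesis using A B by blast
qed

end
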